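(* For the $N$-relay 1-2-1 diamond network with relays operating in HD, writing $\ell_i=\ell_{i,0}$ and $r_i=\ell_{N+1,i}$, $\mathsf{C}_{\rm cs,iid}$ (HD states) equals the optimal value of the linear program in variables $\lambda_{\ell_i},\lambda_{r_i}$ ($i\in[1:N]$): $$\max\sum_{i=1}^N\lambda_{\ell_i}\ell_i\ \text{ s.t. }\ \lambda_{\ell_i}\ell_i=\lambda_{r_i}r_i\ \forall i;\quad \sum_{i=1}^N\lambda_{\ell_i}\le1;\quad\sum_{i=1}^N\lambda_{r_i}\le1;\quad \lambda_{\ell_i}+\lambda_{r_i}\le1\ \forall i;\quad \lambda_{\ell_i},\lambda_{r_i}\ge0\ \forall i.$$
   Context: Diamond network: nodes $[0:N+1]$, source $0$, destination $N+1$, relays $[1:N]$; the only links are $(0,i)$ and $(i,N+1)$ for $i\in[1:N]$, with positive capacities $\ell_{i,0}$ and $\ell_{N+1,i}$; all other $\ell_{j,i}=0$. HD network states: a state $s$ consists of sets $s_{i,t}\subseteq[1:N+1]\setminus\{i\}$ and $s_{i,r}\subseteq[0:N]\setminus\{i\}$, each of cardinality at most $1$, for $i\in[0:N+1]$, with $s_{0,r}=s_{N+1,t}=\emptyset$ and $|s_{i,t}|+|s_{i,r}|\le1$ for $i\in[1:N]$; $\mathcal S$ is the set of all such states. Link $(i,j)$ is active in $s$ if $j\in s_{i,t}$ and $i\in s_{j,r}$. $\mathsf{C}_{\rm cs,iid}=\max_{\lambda}\min_{\Omega}\sum_{i\in\Omega,\ j\in\Omega^c}\big(\sum_{s\in\mathcal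 S:\ (i,j)\text{ active in }s}\lambda_s\big)\ell_{j,i}$, maximum over probability vectors $(\lambda_s)_{s\in\mathcal S}$, minimum over $\Omega$ with $0\in\Omega\subseteq[0:N]$, $\Omega^c=[0:N+1]\setminus\Omega$. *)

theory Defs
  imports Complex_Main
begin

text \<open>Nodes are the naturals 0..N+1. A network state is a pair (st, sr) of functions
  giving, for each node i, the transmit set s_{i,t} and the receive set s_{i,r}.
  Outside [0:N+1] both are fixed to the empty set so that the state set is finite.\<close>

type_synonym hd_state = "(nat \<Rightarrow> nat set) \<times> (nat \<Rightarrow> nat set)"

definition hd_states :: "nat \<Rightarrow> hd_state set" where
  "hd_states N = {(st, sr).
     (\<forall>i. N + 1 < i \<longrightarrow> st i = {} \<and> sr i = {}) \<and>
     (\<forall>i\<in>{0..N+1}. st i \<subseteq> {1..N+1} - {i} \<and> sr i \<subseteq> {0..N} - {i}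
                    \<and> card (st i) \<le> 1 \<and> card (sr i) \<le> 1) \<and>
     sr 0 = {} \<and> st (N+1) = {} \<and>
     (\<forall>i\<in>{1..N}. card (st i) + card (sr i) \<le> 1)}"

definition link_active :: "hd_state \<Rightarrow> nat \<Rightarrow> nat \<Rightarrow> bool" where
  "link_active s i j \<longleftrightarrow> j \<in> fst s i \<and> i \<in> snd s j"

definition prob_vectors :: "nat \<Rightarrow> (hd_state \<Rightarrow> real) set" where
  "prob_vectors N = {lam. (\<forall>s\<in>hd_states N. lam s \<ge> 0) \<and> (\<Sum>s\<in>hd_states N. lam s) = 1}"

text \<open>Capacity convention: cap j i is \<ell>_{j,i}, the capacity of link from i to j.\<close>
definition cut_value :: "nat \<Rightarrow> (nat \<Rightarrow> nat \<Rightarrow> real) \<Rightarrow> (hd_state \<Rightarrow> real) \<Rightarrow> nat set \<Rightarrow> real" where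
  "cut_value N cap lam \<Omega> =
     (\<Sum>i\<in>\<Omega>. \<Sum>j\<in>{0..N+1} - \<Omega>.
        (\<Sum>s\<in>{s\<in>hd_states N. link_active s i j}. lam s) * cap j i)"

definition cuts :: "nat \<Rightarrow> nat set set" where
  "cuts N = {\<Omega>. 0 \<in> \<Omega> \<and> \<Omega> \<subseteq> {0..N}}"

definition C_cs_iid :: "nat \<Rightarrow> (nat \<Rightarrow> nat \<Rightarrow> real) \<Rightarrow> real" where
  "C_cs_iid N cap = (SUP lam\<in>prob_vectors N. Min (cut_value N cap lam ` cuts N))"

definition diamond_cap :: "nat \<Rightarrow> (nat \<Rightarrow> real) \<Rightarrow> (nat \<Rightarrow> real) \<Rightarrow> nat \<Rightarrow> nat \<Rightarrow> real" where
  "diamond_cap N l r j i =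
     (if i = 0 \<and> j \<in> {1..N} then l j
      else if j = N + 1 \<and> i \<in> {1..N} then r i
      else 0)"

definition lp_feasible :: "nat \<Rightarrow> (nat \<Rightarrow> real) \<Rightarrow> (nat \<Rightarrow> real) \<Rightarrow> ((nat \<Rightarrow> real) \<times> (nat \<Rightarrow> real)) set" where
  "lp_feasible N l r = {(a, b).
     (\<forall>i\<in>{1..N}. a i * l i = b i * r i) \<and>
     (\<Sum>i=1..N. a i) \<le> 1 \<and> (\<Sum>i=1..N. b i) \<le> 1 \<and>
     (\<forall>i\<in>{1..N}. a i + b i \<le> 1) \<and>
     (\<forall>i\<in>{1..N}. a i \<ge> 0 \<and> b i \<ge> 0)}"

definition lp_value :: "nat \<Rightarrow> (nat \<Rightarrow> real) \<Rightarrow> (nat \<Rightarrow> real) \<Rightarrow> real" where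
  "lp_value N l r = (SUP ab\<in>lp_feasible N l r. \<Sum>i=1..N. fst ab i * l i)"

end

theory Submission
  imports Defs
begin

lemma three:
  fixes x y z :: nat and p q :: "nat \<Rightarrow> real"
  assumes d: "x\<noteq>y" "y\<noteq>z" "x\<noteq>z"
    and nn: "p x \<ge> 0" "p y \<ge> 0" "p z \<ge> 0" "q x \<ge> 0" "q y \<ge> 0" "q z \<ge> 0"
    and sp: "p x + p y + p z = T" and sq: "q x + q y + q z = T"
    and b: "p x + q x \<le> T" "p y + q y \<le> T" "p z + q z \<le> T"
  shows "\<exists>w. (\<forall>u v. w u v \<ge> 0) \<and> (\<forall>u. w u u = 0) \<and>
     (\<forall>u\<in>{x,y,z}. sum (w u) {x,y,z} = p u) \<and> (\<forall>v\<in>{x,y,z}. (\<Sum>u\<in>{x,y,z}. w u v) = q v)"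
proof -
  define t where "t = max 0 (max (p x - q z) (p x + p y - q x - q z))"
  define w where "w = (\<lambda>u v. if u = x \<and> v = y then t else if u = x \<and> v = z then p x - t
      else if u = y \<and> v = z then q z - p x + t else if u = y \<and> v = x then p y - q z + p x - t
      else if u = z \<and> v = x then q x - p y + q z - p x + t else if u = z \<and> v = y then q y - t else (0::real))"
  have t1: "t \<ge> 0" "t \<ge> p x - q z" "t \<ge> p x + p y - q x - q z" unfolding t_def by auto
  have t2: "t \<le> p x" "t \<le> q y" "t \<le> p x + p y - q z" unfolding t_def using assms by auto
  have "\<forall>u v. w u v \<ge> 0" unfolding w_def using t1 t2 by auto
  moreover have "\<forall>u. w u u = 0" unfolding w_def using d by auto
  moreover have "\<forall>u\<in>{x,y,z}. sum (w u) {x,y,z} = p u"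
    using d sp sq unfolding w_def by auto
  moreover have "\<forall>v\<in>{x,y,z}. (\<Sum>u\<in>{x,y,z}. w u v) = q v"
    using d sp sq unfolding w_def by auto
  ultimately show ?thesis by blast
qed

lemma merge_sum:
  fixes f :: "nat \<Rightarrow> real"
  assumes "finite X" "x\<in>X" "y\<in>X" "x\<noteq>y"
    and "\<And>v. v \<notin> {x,y} \<Longrightarrow> \<sigma> v = 1"
    and "(\<sigma> x + \<sigma> y) * f x = f x"
  shows "(\<Sum>v\<in>X. \<sigma> v * f (if v = y then x else v)) = (\<Sum>v\<in>X-{y}. f v)"
proof -
  have "(\<Sum>v\<in>X. \<sigma> v * f (if v = y then x else v)) = \<sigma> y * f x + (\<Sum>v\<in>X-{y}. \<sigma> v * f (if v = y then x else v))"
    using assms by (simp add: sum.remove[of X y])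
  also have "(\<Sum>v\<in>X-{y}. \<sigma> v * f (if v = y then x else v)) = \<sigma> x * f x + (\<Sum>v\<in>X-{y}-{x}. \<sigma> v * f (if v = y then x else v))"
    using assms by (subst sum.remove[of _ x]) auto
  also have "(\<Sum>v\<in>X-{y}-{x}. \<sigma> v * f (if v = y then x else v)) = (\<Sum>v\<in>X-{y}-{x}. f v)"
    using assms by (intro sum.cong) auto
  also have "(\<Sum>v\<in>X-{y}. f v) = f x + (\<Sum>v\<in>X-{y}-{x}. f v)"
    using assms by (subst sum.remove[of _ x]) auto
  ultimately show ?thesis using assms(6) by (simp add: algebra_simps)
qed

lemma sum2:
  fixes f :: "nat \<Rightarrow> real"
  assumes "finite X" "x\<in>X" "y\<in>X" "x\<noteq>y"
  shows "sum f X = f x + f y + sum f (X - {x} - {y})"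
proof -
  have "sum f X = f x + sum f (X - {x})" using assms by (simp add: sum.remove)
  also have "sum f (X - {x}) = f y + sum f (X - {x} - {y})" using assms by (subst sum.remove[of _ y]) auto
  finally show ?thesis by simp
qed

lemma coupling:
  fixes X :: "nat set" and p q :: "nat \<Rightarrow> real"
  assumes "finite X" "\<forall>u. p u \<ge> 0 \<and> q u \<ge> 0" "\<forall>u. u \<notin> X \<longrightarrow> p u = 0 \<and> q u = 0"
    "sum p X = T" "sum q X = T" "\<forall>u. p u + q u \<le> T"
  shows "\<exists>w. (\<forall>u v. w u v \<ge> 0) \<and> (\<forall>u. w u u = 0) \<and> (\<forall>u\<in>X. sum (w u) X = p u)
           \<and> (\<forall>v\<in>X. (\<Sum>u\<in>X. w u v) = q v)"
  using assms
proof (induction "card X" arbitrary: X p q rule: less_induct)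
  case less
  note IH = less.hyps and fin = less.prems(1) and nn = less.prems(2) and out = less.prems(3)
    and sp = less.prems(4) and sq = less.prems(5) and bd = less.prems(6)
  consider "card X = 0" | "card X = 1" | "card X = 2" | "card X = 3" | "card X \<ge> 4" by linarith
  then show ?case
  proof cases
    case 1
    then have "X = {}" using fin by simp
    then show ?thesis by (intro exI[of _ "\<lambda>u v. 0"]) auto
  next
    case 2
    then obtain x where X: "X = {x}" by (auto simp: card_1_singleton_iff)
    have "p x = 0" "q x = T" using sp sq bd nn X by (auto, smt (verit))
    then have "T = 0" using sp X by simp
    then show ?thesis using X sp sq \<open>p x = 0\<close> \<open>q x = T\<close> by (intro exI[of _ "\<lambda>u v. 0"]) auto
  next
    case 3
    then obtain x y where X: "X = {x,y}" "x \<noteq> y" by (auto simp: card_2_iff)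
    have e: "p x + p y = T" "q x + q y = T" using sp sq X by auto
    have "q x = p y" "q y = p x" using e bd[rule_format, of x] bd[rule_format, of y] by linarith+
    then show ?thesis using X nn
      by (intro exI[of _ "\<lambda>u v. if u = x \<and> v = y then p x else if u = y \<and> v = x then p y else 0"]) auto
  next
    case 4
    then obtain x y z where X: "X = {x,y,z}" "x \<noteq> y" "y \<noteq> z" "x \<noteq> z" by (auto simp: card_3_iff)
    have "p x + p y + p z = T" "q x + q y + q z = T" using sp sq X by (auto simp: add.assoc)
    from three[OF X(2-4) _ _ _ _ _ _ this] nn bd X show ?thesis by auto
  next
    case 5
    define r where "r = (\<lambda>u. p u + q u)"
    have Xne: "X \<noteq> {}" using 5 by auto
    obtain x where x: "x \<in> X" "r x = Min (r ` X)" by (metis (no_types) Min_in finite_imageI image_iff image_is_empty fin Xne)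
    have "card (X - {x}) = card X - 1" using x fin by (simp add: card_Diff_singleton)
    then have "card (X - {x}) > 0" using 5 by linarith
    then have Xne2: "X - {x} \<noteq> {}" by (simp add: card_gt_0_iff)
    obtain y where y: "y \<in> X - {x}" "r y = Min (r ` (X-{x}))" by (metis (no_types) Min_in finite_imageI image_iff image_is_empty fin Xne2 finite_Diff)
    have rx: "\<forall>z\<in>X. r x \<le> r z" using x fin by auto
    have ry: "\<forall>z\<in>X-{x}. r y \<le> r z" using y fin by auto
    have cXxy: "card (X - {x} - {y}) \<ge> 2" using 5 x y fin by (simp add: card_Diff_singleton_if)
    have s2: "sum r X = 2*T" unfolding r_def using sp sq by (simp add: sum.distrib)
    have "sum r X = r x + r y + sum r (X - {x} - {y})"
      using x y fin by (intro sum2) auto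
    moreover have "of_nat (card (X - {x} - {y})) * r y \<le> sum r (X - {x} - {y})"
      by (rule sum_bounded_below) (use ry in auto)
    moreover have "r y \<ge> 0" using nn unfolding r_def by (simp add: add_nonneg_nonneg)
    moreover have "2 * r y \<le> of_nat (card (X - {x} - {y})) * r y"
      using cXxy \<open>r y \<ge> 0\<close> by (intro mult_right_mono) auto
    moreover have "r x \<le> r y" using rx y by auto
    ultimately have rxy: "r x + r y \<le> T" using s2 by linarith
    have yx: "y \<noteq> x" "y \<in> X" using y by auto
    define X' where "X' = X - {y}"
    define p' where "p' = p(x := p x + p y, y := 0)"
    define q' where "q' = q(x := q x + q y, y := 0)"
    have T0: "T \<ge> 0" using sp nn by (metis sum_nonneg)
    have cX': "card X' < card X" unfolding X'_def using yx fin 5 by (simp add: card_Diff_singleton)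
    have "\<exists>w. (\<forall>u v. w u v \<ge> 0) \<and> (\<forall>u. w u u = 0) \<and> (\<forall>u\<in>X'. sum (w u) X' = p' u)
           \<and> (\<forall>v\<in>X'. (\<Sum>u\<in>X'. w u v) = q' v)"
    proof (rule IH[OF cX'])
      show "finite X'" using fin X'_def by auto
      show "\<forall>u. 0 \<le> p' u \<and> 0 \<le> q' u" using nn unfolding p'_def q'_def by (simp add: add_nonneg_nonneg)
      show "\<forall>u. u \<notin> X' \<longrightarrow> p' u = 0 \<and> q' u = 0" using out x yx unfolding p'_def q'_def X'_def by auto
      have "sum p' X' = p' x + sum p' (X - {y} - {x})" unfolding X'_def using fin x yx by (simp add: sum.remove)
      also have "sum p' (X - {y} - {x}) = sum p (X - {x} - {y})" unfolding p'_def by (intro sum.cong) auto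
      finally show "sum p' X' = T" using sum2[OF fin x(1) yx(2) yx(1)[symmetric], of p] sp yx unfolding p'_def by simp
      have "sum q' X' = q' x + sum q' (X - {y} - {x})" unfolding X'_def using fin x yx by (simp add: sum.remove)
      also have "sum q' (X - {y} - {x}) = sum q (X - {x} - {y})" unfolding q'_def by (intro sum.cong) auto
      finally show "sum q' X' = T" using sum2[OF fin x(1) yx(2) yx(1)[symmetric], of q] sq yx unfolding q'_def by simp
      show "\<forall>u. p' u + q' u \<le> T" using bd rxy T0 unfolding p'_def q'_def r_def by auto
    qed
    then obtain w' where w'0: "\<forall>u v. w' u v \<ge> 0" and w'd: "\<forall>u. w' u u = 0"
      and w'r: "\<forall>u\<in>X'. sum (w' u) X' = p' u" and w'c: "\<forall>v\<in>X'. (\<Sum>u\<in>X'. w' u v) = q' v" by blast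
    define \<phi> where "\<phi> = (\<lambda>u::nat. if u = y then x else u)"
    define \<rho> where "\<rho> = (\<lambda>u. if u = x then p x / (p x + p y) else if u = y then p y / (p x + p y) else 1)"
    define \<sigma> where "\<sigma> = (\<lambda>u. if u = x then q x / (q x + q y) else if u = y then q y / (q x + q y) else 1)"
    define w where "w = (\<lambda>u v. \<rho> u * \<sigma> v * w' (\<phi> u) (\<phi> v))"
    have xX': "x \<in> X'" unfolding X'_def using x yx by auto
    have \<phi>X: "\<phi> u \<in> X'" if "u \<in> X" for u using that xX' unfolding \<phi>_def X'_def by auto
    have \<rho>0: "\<rho> u \<ge> 0" for u unfolding \<rho>_def using nn by (auto intro!: divide_nonneg_nonneg add_nonneg_nonneg)
    have \<sigma>0: "\<sigma> u \<ge> 0" for u unfolding \<sigma>_def using nn by (auto intro!: divide_nonneg_nonneg add_nonneg_nonneg)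
    have fx: "(\<rho> x + \<rho> y) * w' x k = w' x k" if "k \<in> X'" for k
    proof (cases "p x + p y = 0")
      case True
      have "sum (w' x) X' = 0" using w'r xX' True unfolding p'_def by simp
      then have "w' x k = 0" using sum_nonneg_eq_0_iff[of X' "w' x"] w'0 that fin X'_def by auto
      then show ?thesis by simp
    next
      case False
      then have "\<rho> x + \<rho> y = 1" unfolding \<rho>_def using yx by (simp add: add_divide_distrib[symmetric])
      then show ?thesis by simp
    qed
    have fy: "(\<sigma> x + \<sigma> y) * w' k x = w' k x" if "k \<in> X'" for k
    proof (cases "q x + q y = 0")
      case True
      have "(\<Sum>u\<in>X'. w' u x) = 0" using w'c xX' True unfolding q'_def by simp
      then have "w' k x = 0" using sum_nonneg_eq_0_iff[of X' "\<lambda>u. w' u x"] w'0 that fin X'_def by auto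
      then show ?thesis by simp
    next
      case False
      then have "\<sigma> x + \<sigma> y = 1" unfolding \<sigma>_def using yx by (simp add: add_divide_distrib[symmetric])
      then show ?thesis by simp
    qed
    have \<rho>1: "\<rho> v = 1" if "v \<notin> {x,y}" for v using that unfolding \<rho>_def by auto
    have \<sigma>1: "\<sigma> v = 1" if "v \<notin> {x,y}" for v using that unfolding \<sigma>_def by auto
    have rows: "sum (w u) X = p u" if "u \<in> X" for u
    proof -
      have "sum (w u) X = \<rho> u * (\<Sum>v\<in>X. \<sigma> v * w' (\<phi> u) (\<phi> v))"
        unfolding w_def by (simp add: sum_distrib_left mult.assoc)
      also have "(\<Sum>v\<in>X. \<sigma> v * w' (\<phi> u) (\<phi> v)) = (\<Sum>v\<in>X'. w' (\<phi> u) v)"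
        unfolding \<phi>_def X'_def
        by (rule merge_sum[OF fin x(1) yx(2) yx(1)[symmetric], of \<sigma> "w' (\<phi> u)", unfolded \<phi>_def])
           (use \<sigma>1 fy[OF \<phi>X[OF that]] in \<open>auto simp: \<phi>_def\<close>)
      also have "\<dots> = p' (\<phi> u)" using w'r \<phi>X[OF that] by auto
      finally show ?thesis using yx unfolding \<rho>_def p'_def \<phi>_def
        by (cases "p x + p y = 0") (auto simp: add_nonneg_eq_0_iff nn)
    qed
    have cols: "(\<Sum>u\<in>X. w u v) = q v" if "v \<in> X" for v
    proof -
      have "(\<Sum>u\<in>X. w u v) = \<sigma> v * (\<Sum>u\<in>X. \<rho> u * (\<lambda>k. w' k (\<phi> v)) (\<phi> u))"
        unfolding w_def by (simp add: sum_distrib_left mult.assoc mult.left_commute)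
      also have "(\<Sum>u\<in>X. \<rho> u * (\<lambda>k. w' k (\<phi> v)) (\<phi> u)) = (\<Sum>u\<in>X'. w' u (\<phi> v))"
        unfolding \<phi>_def X'_def
        by (rule merge_sum[OF fin x(1) yx(2) yx(1)[symmetric], of \<rho> "\<lambda>k. w' k (\<phi> v)", unfolded \<phi>_def])
           (use \<rho>1 fx[OF \<phi>X[OF that]] in \<open>auto simp: \<phi>_def\<close>)
      also have "\<dots> = q' (\<phi> v)" using w'c \<phi>X[OF that] by auto
      finally show ?thesis using yx unfolding \<sigma>_def q'_def \<phi>_def
        by (cases "q x + q y = 0") (auto simp: add_nonneg_eq_0_iff nn)
    qed
    have "\<forall>u v. w u v \<ge> 0" unfolding w_def using \<rho>0 \<sigma>0 w'0 by auto
    moreover have "\<forall>u. w u u = 0" unfolding w_def using w'd by auto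
    ultimately show ?thesis using rows cols by blast
  qed
qed



definition xo :: "nat \<Rightarrow> (hd_state \<Rightarrow> real) \<Rightarrow> nat \<Rightarrow> real" where
  "xo N lam i = (\<Sum>s\<in>{s\<in>hd_states N. link_active s 0 i}. lam s)"
definition yo :: "nat \<Rightarrow> (hd_state \<Rightarrow> real) \<Rightarrow> nat \<Rightarrow> real" where
  "yo N lam i = (\<Sum>s\<in>{s\<in>hd_states N. link_active s i (N+1)}. lam s)"
definition FF :: "nat \<Rightarrow> (nat \<Rightarrow> real) \<Rightarrow> (nat \<Rightarrow> real) \<Rightarrow> (hd_state \<Rightarrow> real) \<Rightarrow> real" where
  "FF N l r lam = (\<Sum>i=1..N. min (xo N lam i * l i) (yo N lam i * r i))"

lemma finite_hd: "finite (hd_states N)"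
proof -
  define A where "A = {f::nat\<Rightarrow>nat set. \<forall>x. (x \<in> {0..N+1} \<longrightarrow> f x \<in> Pow {0..N+1}) \<and> (x \<notin> {0..N+1} \<longrightarrow> f x = {})}"
  have "finite A" unfolding A_def by (intro finite_set_of_finite_funs) auto
  moreover have "hd_states N \<subseteq> A \<times> A" unfolding hd_states_def A_def by fastforce
  ultimately show ?thesis by (meson finite_SigmaI rev_finite_subset)
qed

lemma hd_unpack:
  assumes "s \<in> hd_states N"
  shows "\<And>i. N+1<i \<Longrightarrow> fst s i = {} \<and> snd s i = {}"
    "\<And>i. i \<le> N+1 \<Longrightarrow> fst s i \<subseteq> {1..N+1}-{i} \<and> snd s i \<subseteq> {0..N}-{i} \<and> card (fst s i) \<le> 1 \<and> card (snd s i) \<le> 1"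
    "snd s 0 = {}" "fst s (N+1) = {}" "\<And>i. i \<in> {1..N} \<Longrightarrow> card (fst s i) + card (snd s i) \<le> 1"
proof -
  obtain st sr where s: "s = (st, sr)" by fastforce
  have h: "(\<forall>i. N+1<i \<longrightarrow> st i = {} \<and> sr i = {}) \<and>
     (\<forall>i\<in>{0..N+1}. st i \<subseteq> {1..N+1} - {i} \<and> sr i \<subseteq> {0..N} - {i}
                    \<and> card (st i) \<le> 1 \<and> card (sr i) \<le> 1) \<and>
     sr 0 = {} \<and> st (N+1) = {} \<and>
     (\<forall>i\<in>{1..N}. card (st i) + card (sr i) \<le> 1)" using assms unfolding s hd_states_def by simp
  show "\<And>i. N+1<i \<Longrightarrow> fst s i = {} \<and> snd s i = {}" using h s by simp
  show "\<And>i. i \<le> N+1 \<Longrightarrow> fst s i \<subseteq> {1..N+1}-{i} \<and> snd s i \<subseteq> {0..N}-{i} \<and> card (fst s i) \<le> 1 \<and> card (snd s i) \<le> 1"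
    using h s by simp
  show "snd s 0 = {}" "fst s (N+1) = {}" using h s by simp_all
  show "\<And>i. i \<in> {1..N} \<Longrightarrow> card (fst s i) + card (snd s i) \<le> 1" using h s by simp
qed

lemma hd_fin: assumes "s \<in> hd_states N" shows "finite (fst s i)" "finite (snd s i)"
proof -
  have "fst s i \<subseteq> {0..N+1} \<and> snd s i \<subseteq> {0..N+1}"
  proof (cases "i \<le> N+1")
    case True then show ?thesis using hd_unpack(2)[OF assms True] by auto
  next
    case False then show ?thesis using hd_unpack(1)[OF assms, of i] by auto
  qed
  then show "finite (fst s i)" "finite (snd s i)" using finite_subset by auto
qed

lemma hd_card0: assumes "s \<in> hd_states N" shows "card (fst s 0) \<le> 1" "card (snd s (N+1)) \<le> 1"
  using hd_unpack(2)[OF assms, of 0] hd_unpack(2)[OF assms, of "N+1"] by auto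

lemma hd_relay: assumes "s \<in> hd_states N" "i \<in> {1..N}" shows "\<not> (N+1 \<in> fst s i \<and> 0 \<in> snd s i)"
proof
  assume a: "N+1 \<in> fst s i \<and> 0 \<in> snd s i"
  have "card (fst s i) \<noteq> 0" "card (snd s i) \<noteq> 0" using a hd_fin[OF assms(1)] by auto
  moreover have "card (fst s i) + card (snd s i) \<le> 1" using hd_unpack(5)[OF assms] .
  ultimately show False by linarith
qed

lemma sum_card_le:
  fixes lam :: "'s \<Rightarrow> real"
  assumes "finite H" "finite I" "\<forall>s\<in>H. lam s \<ge> 0" "sum lam H = 1" "\<forall>s\<in>H. card {i\<in>I. P s i} \<le> 1"
  shows "(\<Sum>i\<in>I. \<Sum>s\<in>{s\<in>H. P s i}. lam s) \<le> 1"
proof -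
  have "(\<Sum>i\<in>I. \<Sum>s\<in>{s\<in>H. P s i}. lam s) = (\<Sum>i\<in>I. \<Sum>s\<in>H. if P s i then lam s else 0)"
    using assms by (simp add: sum.inter_filter)
  also have "\<dots> = (\<Sum>s\<in>H. \<Sum>i\<in>I. if P s i then lam s else 0)" by (rule sum.swap)
  also have "\<dots> = (\<Sum>s\<in>H. lam s * card {i\<in>I. P s i})"
    using assms by (intro sum.cong) (auto simp: sum.If_cases Int_def)
  also have "\<dots> \<le> (\<Sum>s\<in>H. lam s)"
    using assms by (intro sum_mono) (simp add: mult_left_le)
  finally show ?thesis using assms by simp
qed

lemma prob_props:
  assumes "lam \<in> prob_vectors N"
  shows "(\<Sum>i=1..N. xo N lam i) \<le> 1" "(\<Sum>i=1..N. yo N lam i) \<le> 1"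
    "\<And>i. i \<in> {1..N} \<Longrightarrow> xo N lam i + yo N lam i \<le> 1"
    "\<And>i. xo N lam i \<ge> 0" "\<And>i. yo N lam i \<ge> 0"
    "\<And>i. xo N lam i \<le> 1"
proof -
  have l0: "\<forall>s\<in>hd_states N. lam s \<ge> 0" and l1: "sum lam (hd_states N) = 1"
    using assms unfolding prob_vectors_def by auto
  show "(\<Sum>i=1..N. xo N lam i) \<le> 1" unfolding xo_def
  proof (rule sum_card_le[OF finite_hd _ l0 l1], simp, intro ballI)
    fix s assume s: "s \<in> hd_states N"
    have "{i \<in> {1..N}. link_active s 0 i} \<subseteq> fst s 0" unfolding link_active_def by auto
    then show "card {i \<in> {1..N}. link_active s 0 i} \<le> 1"
      using hd_card0[OF s] hd_fin[OF s] by (meson card_mono le_trans)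
  qed
  show "(\<Sum>i=1..N. yo N lam i) \<le> 1" unfolding yo_def
  proof (rule sum_card_le[OF finite_hd _ l0 l1], simp, intro ballI)
    fix s assume s: "s \<in> hd_states N"
    have "{i \<in> {1..N}. link_active s i (N+1)} \<subseteq> snd s (N+1)" unfolding link_active_def by auto
    then show "card {i \<in> {1..N}. link_active s i (N+1)} \<le> 1"
      using hd_card0[OF s] hd_fin[OF s] by (meson card_mono le_trans)
  qed
  show "xo N lam i + yo N lam i \<le> 1" if i: "i \<in> {1..N}" for i
  proof -
    have d: "{s\<in>hd_states N. link_active s 0 i} \<inter> {s\<in>hd_states N. link_active s i (N+1)} = {}"
      using hd_relay[OF _ i] unfolding link_active_def by auto
    have "xo N lam i + yo N lam i = sum lam ({s\<in>hd_states N. link_active s 0 i} \<union> {s\<in>hd_states N. link_active s i (N+1)})"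
      unfolding xo_def yo_def using d finite_hd by (simp add: sum.union_disjoint)
    also have "\<dots> \<le> sum lam (hd_states N)" using l0 finite_hd by (intro sum_mono2) auto
    finally show ?thesis using l1 by simp
  qed
  show "xo N lam i \<ge> 0" for i unfolding xo_def using l0 by (auto intro: sum_nonneg)
  show "yo N lam i \<ge> 0" for i unfolding yo_def using l0 by (auto intro: sum_nonneg)
  show "xo N lam i \<le> 1" for i
  proof -
    have "xo N lam i \<le> sum lam (hd_states N)" unfolding xo_def using l0 finite_hd by (intro sum_mono2) auto
    then show ?thesis using l1 by simp
  qed
qed

lemma cut_formula:
  assumes "\<Omega> \<in> cuts N"
  shows "cut_value N (diamond_cap N l r) lam \<Omega> =
    (\<Sum>j\<in>{1..N}-\<Omega>. xo N lam j * l j) + (\<Sum>i\<in>\<Omega>-{0}. yo N lam i * r i)"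
proof -
  have O: "0 \<in> \<Omega>" "\<Omega> \<subseteq> {0..N}" using assms unfolding cuts_def by auto
  have fO: "finite \<Omega>" using O finite_subset by blast
  define g where "g = (\<lambda>i j. (\<Sum>s\<in>{s\<in>hd_states N. link_active s i j}. lam s) * diamond_cap N l r j i)"
  have "cut_value N (diamond_cap N l r) lam \<Omega> = (\<Sum>i\<in>\<Omega>. \<Sum>j\<in>{0..N+1}-\<Omega>. g i j)"
    unfolding cut_value_def g_def by simp
  also have "\<dots> = (\<Sum>j\<in>{0..N+1}-\<Omega>. g 0 j) + (\<Sum>i\<in>\<Omega>-{0}. \<Sum>j\<in>{0..N+1}-\<Omega>. g i j)"
    using O fO by (simp add: sum.remove)
  also have "(\<Sum>j\<in>{0..N+1}-\<Omega>. g 0 j) = (\<Sum>j\<in>{0..N+1}-\<Omega>. if j \<in> {1..N} then xo N lam j * l j else 0)"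
    unfolding g_def diamond_cap_def xo_def by (intro sum.cong) auto
  also have "\<dots> = (\<Sum>j\<in>({0..N+1}-\<Omega>) \<inter> {1..N}. xo N lam j * l j)"
    by (simp add: sum.inter_restrict)
  also have "({0..N+1}-\<Omega>) \<inter> {1..N} = {1..N} - \<Omega>" by auto
  also have "(\<Sum>i\<in>\<Omega>-{0}. \<Sum>j\<in>{0..N+1}-\<Omega>. g i j) = (\<Sum>i\<in>\<Omega>-{0}. yo N lam i * r i)"
  proof (intro sum.cong refl)
    fix i assume i: "i \<in> \<Omega> - {0}"
    then have i': "i \<in> {1..N}" using O by auto
    have "(\<Sum>j\<in>{0..N+1}-\<Omega>. g i j) = (\<Sum>j\<in>{0..N+1}-\<Omega>. if j = N+1 then yo N lam i * r i else 0)"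
      unfolding g_def diamond_cap_def yo_def using i' by (intro sum.cong) auto
    also have "\<dots> = yo N lam i * r i" using O by (auto simp: sum.delta)
    finally show "(\<Sum>j\<in>{0..N+1}-\<Omega>. g i j) = yo N lam i * r i" .
  qed
  finally show ?thesis .
qed

lemma finite_cuts: "finite (cuts N)" "cuts N \<noteq> {}"
proof -
  have "cuts N \<subseteq> Pow {0..N}" unfolding cuts_def by auto
  then show "finite (cuts N)" by (meson finite_Pow_iff finite_atLeastAtMost finite_subset)
  show "cuts N \<noteq> {}" unfolding cuts_def by auto
qed

lemma min_cut:
  shows "Min (cut_value N (diamond_cap N l r) lam ` cuts N) = FF N l r lam"
proof (rule Min_eqI)
  show "finite (cut_value N (diamond_cap N l r) lam ` cuts N)" using finite_cuts by simp
  define m where "m = (\<lambda>i. min (xo N lam i * l i) (yo N lam i * r i))"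
  show "FF N l r lam \<le> c" if cc: "c \<in> cut_value N (diamond_cap N l r) lam ` cuts N" for c
  proof -
    obtain \<Omega> where O: "\<Omega> \<in> cuts N" "c = cut_value N (diamond_cap N l r) lam \<Omega>" using cc by auto
    have sub: "\<Omega> - {0} \<subseteq> {1..N}" using O unfolding cuts_def by auto
    have "FF N l r lam = (\<Sum>i\<in>{1..N} - (\<Omega>-{0}). m i) + (\<Sum>i\<in>\<Omega>-{0}. m i)"
      unfolding FF_def m_def using sub by (simp add: sum.subset_diff)
    also have "{1..N} - (\<Omega>-{0}) = {1..N} - \<Omega>" by auto
    also have "(\<Sum>i\<in>{1..N} - \<Omega>. m i) + (\<Sum>i\<in>\<Omega>-{0}. m i) \<le> c"
      unfolding O(2) cut_formula[OF O(1)] m_def by (intro add_mono sum_mono) auto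
    finally show ?thesis .
  qed
  define \<Omega> where "\<Omega> = insert 0 {i\<in>{1..N}. yo N lam i * r i \<le> xo N lam i * l i}"
  have O: "\<Omega> \<in> cuts N" unfolding \<Omega>_def cuts_def by auto
  have sub: "\<Omega> - {0} \<subseteq> {1..N}" unfolding \<Omega>_def by auto
  have "FF N l r lam = (\<Sum>i\<in>{1..N} - (\<Omega>-{0}). m i) + (\<Sum>i\<in>\<Omega>-{0}. m i)"
    unfolding FF_def m_def using sub by (simp add: sum.subset_diff)
  also have "{1..N} - (\<Omega>-{0}) = {1..N} - \<Omega>" by auto
  also have "(\<Sum>i\<in>{1..N} - \<Omega>. m i) + (\<Sum>i\<in>\<Omega>-{0}. m i) = cut_value N (diamond_cap N l r) lam \<Omega>"
    unfolding cut_formula[OF O] m_def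
    by (intro arg_cong2[where f="(+)"] sum.cong) (auto simp: \<Omega>_def)
  finally show "FF N l r lam \<in> cut_value N (diamond_cap N l r) lam ` cuts N" using O by auto
qed



lemma push:
  fixes W :: "'z \<Rightarrow> real"
  assumes "finite P" "finite H" "mk ` P \<subseteq> H"
  shows "(\<Sum>s\<in>{s\<in>H. Q s}. \<Sum>z\<in>{z\<in>P. mk z = s}. W z) = (\<Sum>z\<in>{z\<in>P. Q (mk z)}. W z)"
proof -
  have "(\<Sum>s\<in>{s\<in>H. Q s}. \<Sum>z\<in>{z. z \<in> {z\<in>P. Q (mk z)} \<and> mk z = s}. W z) = (\<Sum>z\<in>{z\<in>P. Q (mk z)}. W z)"
    by (rule sum.group) (use assms in auto)
  moreover have "(\<Sum>s\<in>{s\<in>H. Q s}. \<Sum>z\<in>{z. z \<in> {z\<in>P. Q (mk z)} \<and> mk z = s}. W z)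
      = (\<Sum>s\<in>{s\<in>H. Q s}. \<Sum>z\<in>{z\<in>P. mk z = s}. W z)"
    by (intro sum.cong refl) auto
  ultimately show ?thesis by simp
qed

lemma construct:
  assumes ab: "(a,b) \<in> lp_feasible N l r"
  shows "\<exists>lam\<in>prob_vectors N. \<forall>i\<in>{1..N}. xo N lam i = a i \<and> yo N lam i = b i"
proof -
  have f1: "\<forall>i\<in>{1..N}. a i \<ge> 0 \<and> b i \<ge> 0" "(\<Sum>i=1..N. a i) \<le> 1" "(\<Sum>i=1..N. b i) \<le> 1"
    "\<forall>i\<in>{1..N}. a i + b i \<le> 1" using ab unfolding lp_feasible_def by auto
  have sa0: "(\<Sum>i=1..N. a i) \<ge> 0" "(\<Sum>i=1..N. b i) \<ge> 0" using f1(1) by (auto intro: sum_nonneg)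
  define X where "X = {0..N+1}"
  define p where "p = (\<lambda>u. if u \<in> {1..N} then a u else if u = 0 then 1 - (\<Sum>i=1..N. a i) else 0)"
  define q where "q = (\<lambda>u. if u \<in> {1..N} then b u else if u = N+1 then 1 - (\<Sum>i=1..N. b i) else 0)"
  have fX: "finite X" unfolding X_def by simp
  have X1: "X - {0} - {N+1} = {1..N}" unfolding X_def by auto
  have "sum p X = p 0 + p (N+1) + sum p (X - {0} - {N+1})" by (rule sum2) (auto simp: X_def fX)
  also have "sum p (X - {0} - {N+1}) = (\<Sum>i=1..N. a i)" unfolding X1 p_def by (intro sum.cong) auto
  finally have sp: "sum p X = 1" unfolding p_def by simp
  have "sum q X = q 0 + q (N+1) + sum q (X - {0} - {N+1})" by (rule sum2) (auto simp: X_def fX)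
  also have "sum q (X - {0} - {N+1}) = (\<Sum>i=1..N. b i)" unfolding X1 q_def by (intro sum.cong) auto
  finally have sq: "sum q X = 1" unfolding q_def by simp
  obtain w where w0: "\<forall>u v. w u v \<ge> 0" and wd: "\<forall>u. w u u = 0" and wr: "\<forall>u\<in>X. sum (w u) X = p u"
    and wc: "\<forall>v\<in>X. (\<Sum>u\<in>X. w u v) = q v"
  proof -
    have "\<exists>w. (\<forall>u v. w u v \<ge> 0) \<and> (\<forall>u. w u u = 0) \<and> (\<forall>u\<in>X. sum (w u) X = p u)
           \<and> (\<forall>v\<in>X. (\<Sum>u\<in>X. w u v) = q v)"
    proof (rule coupling[OF fX _ _ sp sq])
      show "\<forall>u. 0 \<le> p u \<and> 0 \<le> q u" using f1 unfolding p_def q_def by auto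
      show "\<forall>u. u \<notin> X \<longrightarrow> p u = 0 \<and> q u = 0" unfolding p_def q_def X_def by auto
      show "\<forall>u. p u + q u \<le> 1" using f1 sa0 unfolding p_def q_def by auto
    qed
    then show ?thesis using that by blast
  qed
  define mk where "mk = (\<lambda>z::nat\<times>nat. ((\<lambda>k. if k = 0 \<and> fst z \<in> {1..N} then {fst z} else if k = snd z \<and> snd z \<in> {1..N} then {N+1} else {}),
        (\<lambda>k. if k = fst z \<and> fst z \<in> {1..N} then {0} else if k = N+1 \<and> snd z \<in> {1..N} then {snd z} else {})) :: hd_state)"
  define P where "P = {z \<in> X \<times> X. fst z \<noteq> snd z}"
  define W where "W = (\<lambda>z. w (fst z) (snd z))"
  define lam where "lam = (\<lambda>s. \<Sum>z\<in>{z\<in>P. mk z = s}. W z)"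
  have fP: "finite P" unfolding P_def using fX by simp
  have mkH: "mk ` P \<subseteq> hd_states N"
  proof
    fix s assume "s \<in> mk ` P"
    then obtain u v where uv: "u \<noteq> v" "s = mk (u,v)" unfolding P_def by auto
    show "s \<in> hd_states N" unfolding uv(2) mk_def hd_states_def using uv(1) by auto
  qed
  have "sum W P = sum W (X \<times> X)"
    by (rule sum.mono_neutral_left) (use fX wd in \<open>auto simp: P_def W_def\<close>)
  also have "\<dots> = (\<Sum>u\<in>X. \<Sum>v\<in>X. w u v)" unfolding W_def by (simp add: sum.cartesian_product split_def)
  also have "\<dots> = 1" using wr sp by simp
  finally have sW: "sum W P = 1" .
  have "sum lam (hd_states N) = sum W P"
    using push[OF fP finite_hd mkH, where Q="\<lambda>_. True" and W=W] unfolding lam_def by simp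
  moreover have "\<forall>s. lam s \<ge> 0" unfolding lam_def W_def using w0 by (auto intro: sum_nonneg)
  ultimately have lamP: "lam \<in> prob_vectors N" unfolding prob_vectors_def using sW by auto
  have "xo N lam i = a i \<and> yo N lam i = b i" if i: "i \<in> {1..N}" for i
  proof
    have iX: "i \<in> X" using i unfolding X_def by auto
    have "xo N lam i = (\<Sum>z\<in>{z\<in>P. link_active (mk z) 0 i}. W z)"
      unfolding xo_def lam_def by (rule push[OF fP finite_hd mkH])
    also have "{z\<in>P. link_active (mk z) 0 i} = (\<lambda>v. (i,v)) ` (X - {i})"
      using i iX unfolding P_def link_active_def mk_def by auto
    also have "(\<Sum>z\<in>(\<lambda>v. (i,v)) ` (X - {i}). W z) = (\<Sum>v\<in>X-{i}. w i v)"
      unfolding W_def by (subst sum.reindex) (auto simp: inj_on_def)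
    also have "\<dots> = p i" using wr iX wd fX by (simp add: sum.remove)
    finally show "xo N lam i = a i" using i unfolding p_def by simp
    have "yo N lam i = (\<Sum>z\<in>{z\<in>P. link_active (mk z) i (N+1)}. W z)"
      unfolding yo_def lam_def by (rule push[OF fP finite_hd mkH])
    also have "{z\<in>P. link_active (mk z) i (N+1)} = (\<lambda>u. (u,i)) ` (X - {i})"
      using i iX unfolding P_def link_active_def mk_def by auto
    also have "(\<Sum>z\<in>(\<lambda>u. (u,i)) ` (X - {i}). W z) = (\<Sum>u\<in>X-{i}. w u i)"
      unfolding W_def by (subst sum.reindex) (auto simp: inj_on_def)
    also have "\<dots> = q i" using wc iX wd fX by (simp add: sum.remove)
    finally show "yo N lam i = b i" using i unfolding q_def by simp
  qed
  then show ?thesis using lamP by blast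
qed



theorem mainTheorem6:
  fixes N :: nat and l r :: "nat \<Rightarrow> real"
  assumes "\<forall>i\<in>{1..N}. l i > 0" and "\<forall>i\<in>{1..N}. r i > 0"
  shows "C_cs_iid N (diamond_cap N l r) = lp_value N l r"
proof -
  have lp: "\<And>i. i \<in> {1..N} \<Longrightarrow> l i > 0" and rp: "\<And>i. i \<in> {1..N} \<Longrightarrow> r i > 0" using assms by auto
  have C: "C_cs_iid N (diamond_cap N l r) = (SUP lam\<in>prob_vectors N. FF N l r lam)"
    unfolding C_cs_iid_def min_cut by simp
  define e where "e = ((\<lambda>_. {}, \<lambda>_. {}) :: hd_state)"
  have "e \<in> hd_states N" unfolding e_def hd_states_def by auto
  then have "(\<lambda>s. if s = e then 1 else 0) \<in> prob_vectors N"
    unfolding prob_vectors_def using finite_hd by (auto simp: sum.delta)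
  then have pne: "prob_vectors N \<noteq> {}" by auto
  have "((\<lambda>_. 0, \<lambda>_. 0) :: (nat \<Rightarrow> real) \<times> (nat \<Rightarrow> real)) \<in> lp_feasible N l r"
    unfolding lp_feasible_def by auto
  then have fne: "lp_feasible N l r \<noteq> {}" by auto
  have bddF: "bdd_above ((\<lambda>lam. FF N l r lam) ` prob_vectors N)"
  proof (rule bdd_aboveI2)
    fix lam assume lam: "lam \<in> prob_vectors N"
    show "FF N l r lam \<le> (\<Sum>i=1..N. l i)" unfolding FF_def
    proof (rule sum_mono)
      fix i assume i: "i \<in> {1..N}"
      have "xo N lam i * l i \<le> 1 * l i" using prob_props(6)[OF lam] lp[OF i] by (intro mult_right_mono) auto
      then show "min (xo N lam i * l i) (yo N lam i * r i) \<le> l i" by linarith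
    qed
  qed
  have bddL: "bdd_above ((\<lambda>ab. \<Sum>i=1..N. fst ab i * l i) ` lp_feasible N l r)"
  proof (rule bdd_aboveI2)
    fix ab assume ab: "ab \<in> lp_feasible N l r"
    show "(\<Sum>i=1..N. fst ab i * l i) \<le> (\<Sum>i=1..N. l i)"
    proof (rule sum_mono)
      fix i assume i: "i \<in> {1..N}"
      have "fst ab i \<le> 1" using ab i unfolding lp_feasible_def by force
      then show "fst ab i * l i \<le> l i" using lp[OF i] by (simp add: mult_left_le_one_le order_less_imp_le)
    qed
  qed
  have le1: "(SUP lam\<in>prob_vectors N. FF N l r lam) \<le> lp_value N l r"
    unfolding lp_value_def
  proof (rule cSUP_mono[OF pne bddL])
    fix lam assume lam: "lam \<in> prob_vectors N"
    define m where "m = (\<lambda>i. min (xo N lam i * l i) (yo N lam i * r i))"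
    define a where "a = (\<lambda>i. m i / l i)"
    define b where "b = (\<lambda>i. m i / r i)"
    have pp: "\<And>i. xo N lam i \<ge> 0" "\<And>i. yo N lam i \<ge> 0" using prob_props[OF lam] by auto
    have al: "a i * l i = m i" "b i * r i = m i" if i: "i \<in> {1..N}" for i
      unfolding a_def b_def using lp[OF i] rp[OF i] by auto
    have ax: "a i \<le> xo N lam i" "b i \<le> yo N lam i" "a i \<ge> 0" "b i \<ge> 0" if i: "i \<in> {1..N}" for i
    proof -
      show "a i \<le> xo N lam i" unfolding a_def m_def using lp[OF i] by (simp add: divide_le_eq)
      show "b i \<le> yo N lam i" unfolding b_def m_def using rp[OF i] by (simp add: divide_le_eq)
      have "m i \<ge> 0" unfolding m_def using pp[of i] lp[OF i] rp[OF i] by simp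
      then show "a i \<ge> 0" "b i \<ge> 0" unfolding a_def b_def using lp[OF i] rp[OF i] by auto
    qed
    have s1: "sum a {1..N} \<le> 1" using sum_mono[of "{1..N}" a "xo N lam"] ax prob_props(1)[OF lam] by force
    have s2: "sum b {1..N} \<le> 1" using sum_mono[of "{1..N}" b "yo N lam"] ax prob_props(2)[OF lam] by force
    have s3: "\<forall>i\<in>{1..N}. a i + b i \<le> 1" using ax prob_props(3)[OF lam] by force
    have "(a, b) \<in> lp_feasible N l r" unfolding lp_feasible_def using al ax s1 s2 s3 by auto
    moreover have "FF N l r lam \<le> (\<Sum>i=1..N. fst (a,b) i * l i)"
      unfolding FF_def using al by (simp add: m_def)
    ultimately show "\<exists>ab\<in>lp_feasible N l r. FF N l r lam \<le> (\<Sum>i=1..N. fst ab i * l i)" by blast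
  qed
  have le2: "lp_value N l r \<le> (SUP lam\<in>prob_vectors N. FF N l r lam)"
    unfolding lp_value_def
  proof (rule cSUP_mono[OF fne bddF])
    fix ab assume ab: "ab \<in> lp_feasible N l r"
    obtain a b where abe: "ab = (a,b)" by fastforce
    obtain lam where lam: "lam \<in> prob_vectors N" "\<forall>i\<in>{1..N}. xo N lam i = a i \<and> yo N lam i = b i"
      using construct[of a b N l r] ab abe by auto
    have eq: "\<forall>i\<in>{1..N}. a i * l i = b i * r i" using ab abe unfolding lp_feasible_def by auto
    have "(\<Sum>i=1..N. fst ab i * l i) \<le> FF N l r lam"
      unfolding FF_def abe using lam(2) eq by (intro sum_mono) simp
    then show "\<exists>lam\<in>prob_vectors N. (\<Sum>i=1..N. fst ab i * l i) \<le> FF N l r lam" using lam(1) by blast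
  qed
  show ?thesis using C le1 le2 by simp
qed

end
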